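(* Let $p,q$ be positive integers with $p+q$ odd. For every $n\ge1$, the map $\Delta_n:\mathcal{J}^{p,q}_n\to D_{2^{\lfloor n/2\rfloor+1}}$ is surjective.
   Context: Let $p,q$ be positive integers with $p+q$ odd. $\mathbb{Z}_{2^k}$ denotes the integers modulo $2^k$ ($\mathbb{Z}_1$ trivial); as $p+q$ is odd, division by $p+q$ and $(p+q)^2$ is well defined in $\mathbb{Z}_{2^k}$. For $m\ge1$, $D_{2m}$ is the dihedral group of order $2m$, realized as pairs $(f,x)$, $f\in\mathbb{Z}_2$, $x\in\mathbb{Z}_m$, with product $(f_1,x_1)(f_2,x_2)=(f_1+f_2,x_1+(-1)^{f_1}x_2)$. Define $\Phi:D_{2m}\to D_{2m}$, $\Phi((f,x))=(f,\delta(f=1)(p+q)(p-q)-x)$, where $\delta(f=1)$ is $1$ if $f=1$ and $0$ otherwise. $\mathrm{Aut}(T_1)$ is trivial; for $k\ge1$, $\mathrm{Aut}(T_{k+1})$ is the set of triples $g=(g_f,g_L,g_R)$, $g_f\in\mathbb{Z}_2$, $g_L,g_R\in\mathrm{Aut}(T_k)$, with product $(f,A,B)(g,C,D)=(f+g,AC,BD)$ if $f=0$ and $(f+g,AD,BC)$ if $f=1$; subscripts chain ($g_{LR}=(g_L)_R$, $g_{Lf}=(g_L)_f$). Recursively: $\mathcal{J}_1=\mathrm{Aut}(T_2)$, $\psi_1=0$, $\Delta_1(g)=(g_f,0)$; $\mathcal{J}_2=\{g\in\mathrm{Aut}(T_3):g_L=g_R\}$, $\psi_2(g)=\delta(g_{Lf}=1)\in\mathbb{Z}_2$,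 $\Delta_2(g)=(g_f,\psi_2(g))$; for $n\ge3$, $\mathcal{J}_n=\{g\in\mathrm{Aut}(T_{n+1}):g_L,g_R\in\mathcal{J}_{n-1},\ \Delta_{n-1}(g_L)=\Phi(\Delta_{n-1}(g_R))\}$, with $\psi_n:\mathcal{J}_n\to\mathbb{Z}_{2^{\lfloor n/2\rfloor}}$ given by $\psi_n(g)=(\psi_{n-1}(g_L)+\psi_{n-1}(g_R))/(p+q)$ for odd $n$ and $\psi_n(g)=\big(2(\psi_{n-2}(g_{LL})+\psi_{n-2}(g_{RL}))-\delta(g_{Lf}=1)(p+q)(p-q)\big)/(p+q)^2$ for even $n$ (with $2\psi_{n-2}(\cdot)$ read in $\mathbb{Z}_{2^{n/2}}$), and $\Delta_n:\mathcal{J}_n\to D_{2^{\lfloor n/2\rfloor+1}}$ given by $\Delta_n(g)=(g_f,\psi_{n-1}(g_L)-\psi_{n-1}(g_R))$ for odd $n$ and $\Delta_n(g)=(g_f,(p+q)\psi_n(g)-2\psi_{n-1}(g_R))$ for even $n$. *)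

theory Defs
  imports Main
begin

text \<open>Elements of Aut(T_k) as binary trees: Aut(T_1) = {Leaf};
  an element of Aut(T_{k+1}) is Node g_f g_L g_R with g_L, g_R in Aut(T_k).
  The flip bit g_f in Z_2 is encoded as a bool (True = 1).\<close>

datatype aut = Leaf | Node bool aut aut

fun af :: "aut \<Rightarrow> bool" where
  "af (Node f _ _) = f" | "af Leaf = False"
fun aL :: "aut \<Rightarrow> aut" where
  "aL (Node _ l _) = l" | "aL Leaf = Leaf"
fun aR :: "aut \<Rightarrow> aut" where
  "aR (Node _ _ r) = r" | "aR Leaf = Leaf"

text \<open>AutT k = Aut(T_k) for k \<ge> 1 (AutT 0 is unused).\<close>
fun AutT :: "nat \<Rightarrow> aut set" where
  "AutT 0 = {}"
| "AutT (Suc 0) = {Leaf}"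
| "AutT (Suc (Suc k)) = {Node f l r | f l r. l \<in> AutT (Suc k) \<and> r \<in> AutT (Suc k)}"

text \<open>Elements of Z_m are represented by integers in {0..<m}.
  divm m a x is x / a in Z_m: the unique y in {0..<m} with a*y = x (mod m).\<close>
definition divm :: "int \<Rightarrow> int \<Rightarrow> int \<Rightarrow> int" where
  "divm m a x = (THE y. 0 \<le> y \<and> y < m \<and> (a * y) mod m = x mod m)"

text \<open>Dihedral group D_{2m} as pairs (f, x), f in Z_2 (bool), x in Z_m.\<close>
definition Dih :: "int \<Rightarrow> (bool \<times> int) set" where
  "Dih m = {(f, x). 0 \<le> x \<and> x < m}"

definition Phi :: "int \<Rightarrow> int \<Rightarrow> int \<Rightarrow> bool \<times> int \<Rightarrow> bool \<times> int" where
  "Phi p q m d = (fst d, ((if fst d then (p + q) * (p - q) else 0) - snd d) mod m)"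

fun psi :: "int \<Rightarrow> int \<Rightarrow> nat \<Rightarrow> aut \<Rightarrow> int" where
  "psi p q 0 g = 0"
| "psi p q (Suc 0) g = 0"
| "psi p q (Suc (Suc 0)) g = (if af (aL g) then 1 else 0)"
| "psi p q (Suc (Suc (Suc n))) g =
    (let k = Suc (Suc (Suc n)) in
     if odd k then
       divm (2 ^ (k div 2)) (p + q) (psi p q (k - 1) (aL g) + psi p q (k - 1) (aR g))
     else
       divm (2 ^ (k div 2)) ((p + q) ^ 2)
         (2 * (psi p q (k - 2) (aL (aL g)) + psi p q (k - 2) (aL (aR g)))
          - (if af (aL g) then (p + q) * (p - q) else 0)))"

text \<open>Delta_n, with values in D_{2^(n div 2 + 1)}, i.e. second component in Z_{2^(n div 2)}.\<close>
fun Delta :: "int \<Rightarrow> int \<Rightarrow> nat \<Rightarrow> aut \<Rightarrow> bool \<times> int" where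
  "Delta p q 0 g = (af g, 0)"
| "Delta p q (Suc 0) g = (af g, 0)"
| "Delta p q (Suc (Suc 0)) g = (af g, psi p q 2 g)"
| "Delta p q (Suc (Suc (Suc n))) g =
    (let k = Suc (Suc (Suc n)) in
     if odd k then
       (af g, (psi p q (k - 1) (aL g) - psi p q (k - 1) (aR g)) mod 2 ^ (k div 2))
     else
       (af g, ((p + q) * psi p q k g - 2 * psi p q (k - 1) (aR g)) mod 2 ^ (k div 2)))"

fun J :: "int \<Rightarrow> int \<Rightarrow> nat \<Rightarrow> aut set" where
  "J p q 0 = {}"
| "J p q (Suc 0) = AutT 2"
| "J p q (Suc (Suc 0)) = {g \<in> AutT 3. aL g = aR g}"
| "J p q (Suc (Suc (Suc n))) =
    {g \<in> AutT (Suc (Suc (Suc (Suc n)))).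
       aL g \<in> J p q (Suc (Suc n)) \<and> aR g \<in> J p q (Suc (Suc n)) \<and>
       Delta p q (Suc (Suc n)) (aL g) =
         Phi p q (2 ^ (Suc (Suc n) div 2)) (Delta p q (Suc (Suc n)) (aR g))}"

end

theory Submission
  imports Defs
begin

lemma pow2_dvd_cancel_odd:
  fixes a x :: int
  assumes "odd a" "(2::int)^j dvd a * x"
  shows "(2::int)^j dvd x"
proof -
  have "coprime ((2::int)^j) a" using assms(1) by simp
  then show ?thesis using assms(2) coprime_dvd_mult_right_iff by blast
qed

lemma small_dvd_eq:
  fixes y z m :: int
  assumes "0 \<le> y" "y < m" "0 \<le> z" "z < m" "m dvd (y - z)"
  shows "y = z"
proof (rule ccontr)
  assume "y \<noteq> z"
  then have "y - z \<noteq> 0" by simp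
  then have "\<bar>m\<bar> \<le> \<bar>y - z\<bar>" using assms(5) dvd_imp_le_int by blast
  then show False using assms by linarith
qed

lemma divm_unique:
  fixes a x y :: int
  assumes "odd a" "0 \<le> y" "y < 2^j" "(2::int)^j dvd (a * y - x)"
  shows "divm (2^j) a x = y"
  unfolding divm_def
proof (rule the_equality)
  show "0 \<le> y \<and> y < 2 ^ j \<and> a * y mod 2 ^ j = x mod 2 ^ j"
    using assms by (simp add: mod_eq_dvd_iff)
next
  fix z assume z: "0 \<le> z \<and> z < 2 ^ j \<and> a * z mod 2 ^ j = x mod 2 ^ j"
  then have "(2::int)^j dvd (a * z - x)" by (simp add: mod_eq_dvd_iff)
  then have "(2::int)^j dvd (a * z - x) - (a * y - x)" using assms(4) by (rule dvd_diff)
  then have "(2::int)^j dvd a * (z - y)" by (simp add: algebra_simps)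
  then have "(2::int)^j dvd (z - y)" using assms(1) pow2_dvd_cancel_odd by blast
  then show "z = y" using small_dvd_eq[of z "2^j" y] z assms by simp
qed

lemma divm_prop:
  fixes a x :: int
  assumes "odd a"
  shows "0 \<le> divm (2^j) a x \<and> divm (2^j) a x < 2^j \<and> (2::int)^j dvd (a * divm (2^j) a x - x)"
proof -
  have "coprime a ((2::int)^j)" using assms by simp
  then have g: "gcd a ((2::int)^j) = 1" by simp
  obtain b v where "b * a + v * (2::int)^j = gcd a (2^j)" using bezout_int by blast
  then have bv: "b * a + v * (2::int)^j = 1" using g by simp
  define y where "y = (b * x) mod 2^j"
  have y1: "0 \<le> y" "y < 2^j" unfolding y_def by simp_all
  have "a * b - 1 = - v * 2^j" using bv by (simp add: algebra_simps)
  then have "(2::int)^j dvd (a * b - 1)" by simp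
  then have "(2::int)^j dvd (a * b - 1) * x" by simp
  moreover have "(2::int)^j dvd a * (y - b * x)"
    unfolding y_def by (simp add: mod_eq_dvd_iff[symmetric])
  ultimately have "(2::int)^j dvd (a * b - 1) * x + a * (y - b * x)" by (rule dvd_add)
  then have "(2::int)^j dvd (a * y - x)" by (simp add: algebra_simps)
  then have "divm (2^j) a x = y" using divm_unique assms y1 by blast
  then show ?thesis using y1 \<open>(2::int)^j dvd (a * y - x)\<close> by simp
qed


lemma n3: "2*k+3 = Suc (Suc (Suc (2*k)))" "2*k+4 = Suc (Suc (Suc (2*k+1)))" by simp_all

lemma psi_odd: "psi p q (2*k+3) g =
  divm (2^(k+1)) (p+q) (psi p q (2*k+2) (aL g) + psi p q (2*k+2) (aR g))"
proof -
  have a: "Suc (Suc (Suc (2*k))) div 2 = k+1" by simp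
  have b: "Suc (Suc (Suc (2*k))) - 1 = 2*k+2" by simp
  show ?thesis unfolding n3 by (simp only: psi.simps Let_def a b) simp
qed

lemma psi_even: "psi p q (2*k+4) g =
  divm (2^(k+2)) ((p+q)^2) (2 * (psi p q (2*k+2) (aL (aL g)) + psi p q (2*k+2) (aL (aR g)))
     - (if af (aL g) then (p+q)*(p-q) else 0))"
proof -
  have a: "Suc (Suc (Suc (2*k+1))) div 2 = k+2" by simp
  have b: "Suc (Suc (Suc (2*k+1))) - 2 = 2*k+2" by simp
  have c: "\<not> odd (Suc (Suc (Suc (2*k+1))))" by simp
  show ?thesis unfolding n3 by (simp only: psi.simps Let_def a b c if_False)
qed

lemma Delta_odd: "Delta p q (2*k+3) g =
  (af g, (psi p q (2*k+2) (aL g) - psi p q (2*k+2) (aR g)) mod 2^(k+1))"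
proof -
  have a: "Suc (Suc (Suc (2*k))) div 2 = k+1" by simp
  have b: "Suc (Suc (Suc (2*k))) - 1 = 2*k+2" by simp
  show ?thesis unfolding n3 by (simp only: Delta.simps Let_def a b) simp
qed

lemma Delta_even: "Delta p q (2*k+4) g =
  (af g, ((p+q) * psi p q (2*k+4) g - 2 * psi p q (2*k+3) (aR g)) mod 2^(k+2))"
proof -
  have a: "Suc (Suc (Suc (2*k+1))) div 2 = k+2" by simp
  have b: "Suc (Suc (Suc (2*k+1))) - 1 = 2*k+3" by simp
  have c: "\<not> odd (Suc (Suc (Suc (2*k+1))))" by simp
  show ?thesis unfolding n3 by (simp only: Delta.simps Let_def a b c if_False) (simp only: n3)
qed

lemma J_odd: "J p q (2*k+3) = {g \<in> AutT (2*k+4).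
   aL g \<in> J p q (2*k+2) \<and> aR g \<in> J p q (2*k+2) \<and>
   Delta p q (2*k+2) (aL g) = Phi p q (2^(k+1)) (Delta p q (2*k+2) (aR g))}"
proof -
  have a: "Suc (Suc (2*k)) div 2 = k+1" by simp
  have b: "Suc (Suc (2*k)) = 2*k+2" "Suc (2*k+2) = 2*k+3" "Suc (2*k+3) = 2*k+4"
    "(2*k+2) div 2 = k+1" by simp_all
  note e = J.simps(4)[of p q "2*k"]
  show ?thesis using e by (simp only: b)
qed

lemma J_even: "J p q (2*k+4) = {g \<in> AutT (2*k+5).
   aL g \<in> J p q (2*k+3) \<and> aR g \<in> J p q (2*k+3) \<and>
   Delta p q (2*k+3) (aL g) = Phi p q (2^(k+1)) (Delta p q (2*k+3) (aR g))}"
proof -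
  have a: "Suc (Suc (2*k+1)) div 2 = k+1" by simp
  have b: "Suc (Suc (2*k+1)) = 2*k+3" "Suc (2*k+3) = 2*k+4" "Suc (2*k+4) = 2*k+5"
    "(2*k+3) div 2 = k+1" by simp_all
  note e = J.simps(4)[of p q "2*k+1"]
  show ?thesis using e by (simp only: b)
qed

lemma fst_Delta: "fst (Delta p q n g) = af g"
  by (induction p q n g rule: Delta.induct) (simp_all add: Let_def)

lemma Node_AutT: "Node f l r \<in> AutT (Suc (Suc m)) \<longleftrightarrow> l \<in> AutT (Suc m) \<and> r \<in> AutT (Suc m)"
  by simp

lemma J_AutT: "n \<ge> 1 \<Longrightarrow> J p q n \<subseteq> AutT (Suc n)"
  by (induction p q n rule: J.induct) (auto simp del: AutT.simps simp add: numeral_2_eq_2 numeral_3_eq_3)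


definition OP :: "int \<Rightarrow> int \<Rightarrow> nat \<Rightarrow> int \<Rightarrow> bool" where
  "OP p q n m \<longleftrightarrow> (\<forall>e a b. 0 \<le> a \<longrightarrow> a < m \<longrightarrow> 0 \<le> b \<longrightarrow> b < m \<longrightarrow>
     (\<exists>h\<in>J p q (Suc n). af h = e \<and> psi p q n (aL h) = a \<and> psi p q n (aR h) = b))"

definition EP :: "int \<Rightarrow> int \<Rightarrow> nat \<Rightarrow> int \<Rightarrow> bool" where
  "EP p q n m \<longleftrightarrow> (\<forall>f u v. 0 \<le> u \<longrightarrow> u < m \<longrightarrow> 0 \<le> v \<longrightarrow> v < m \<longrightarrow> even (u - v) \<longrightarrow>
     (\<exists>h\<in>J p q n. af h = f \<and> psi p q n h = u \<and> snd (Delta p q n h) = v))"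

lemma EP_use: "EP p q n m \<Longrightarrow> 0 \<le> u \<Longrightarrow> u < m \<Longrightarrow> 0 \<le> v \<Longrightarrow> v < m \<Longrightarrow> even (u - v)
  \<Longrightarrow> \<exists>h\<in>J p q n. af h = f \<and> psi p q n h = u \<and> snd (Delta p q n h) = v"
  unfolding EP_def by blast

lemma OP_use: "OP p q n m \<Longrightarrow> 0 \<le> a \<Longrightarrow> a < m \<Longrightarrow> 0 \<le> b \<Longrightarrow> b < m
  \<Longrightarrow> \<exists>h\<in>J p q (Suc n). af h = e \<and> psi p q n (aL h) = a \<and> psi p q n (aR h) = b"
  unfolding OP_def by blast

lemma dvd_mod_sub: "(m::int) dvd (x mod m - x)"
  by (simp add: mod_eq_dvd_iff[symmetric])

lemma Delta_pair: "Delta p q n g = (af g, snd (Delta p q n g))"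
  using fst_Delta[of p q n g] by (cases "Delta p q n g") simp

lemma c_odd: "odd (p + q) \<Longrightarrow> odd ((p+q)*(p-q::int))"
proof -
  assume "odd (p+q)"
  moreover have "p - q = (p + q) - 2*q" by simp
  ultimately have "odd (p - q)" by simp
  with \<open>odd (p+q)\<close> show ?thesis by simp
qed

lemma O_base: "OP p q 0 1"
  unfolding OP_def
proof (intro allI impI)
  fix e and a b :: int
  assume "0 \<le> a" "a < 1" "0 \<le> b" "b < 1"
  then have "a = 0" "b = 0" by simp_all
  moreover have "Node e Leaf Leaf \<in> J p q (Suc 0)" by (simp add: numeral_2_eq_2)
  ultimately show "\<exists>h\<in>J p q (Suc 0). af h = e \<and> psi p q 0 (aL h) = a \<and> psi p q 0 (aR h) = b"
    by force
qed

lemma E_base: "EP p q 2 2"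
  unfolding EP_def
proof (intro allI impI)
  fix f and u v :: int
  assume r: "0 \<le> u" "u < 2" "0 \<le> v" "v < 2" "even (u - v)"
  then have uv: "u = v" "u = 0 \<or> u = 1" by presburger+
  define L where "L = Node (u = 1) Leaf Leaf"
  have "Node f L L \<in> J p q 2" by (simp add: numeral_2_eq_2 numeral_3_eq_3 L_def)
  moreover have "psi p q 2 (Node f L L) = u" using uv
    by (auto simp add: numeral_2_eq_2 L_def)
  moreover have "snd (Delta p q 2 (Node f L L)) = v" using uv
    by (auto simp add: numeral_2_eq_2 L_def)
  ultimately show "\<exists>h\<in>J p q 2. af h = f \<and> psi p q 2 h = u \<and> snd (Delta p q 2 h) = v"
    by force
qed


declare AutT.simps[simp del]

lemma O_step:
  assumes s: "odd (p+q)" and E: "EP p q (2*j+2) (2^(j+1))"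
  shows "OP p q (2*j+2) (2^(j+1))"
  unfolding OP_def
proof (intro allI impI)
  fix e and a b :: int
  assume ra: "0 \<le> a" "a < 2^(j+1)" and rb: "0 \<le> b" "b < 2^(j+1)"
  define M where "M = (2::int)^(j+1)"
  define cb where "cb = odd (a+b)"
  define X where "X = (if cb then (p+q)*(p-q) else 0) - b"
  define vL where "vL = X mod M"
  have Mpos: "M > 0" by (simp add: M_def)
  have M2: "2 dvd M" by (simp add: M_def)
  have vr: "0 \<le> vL" "vL < M" using Mpos by (simp_all add: vL_def)
  have "M dvd (vL - X)" unfolding vL_def by (rule dvd_mod_sub)
  then have "2 dvd (vL - X)" using M2 dvd_trans by blast
  moreover have "even (a - X)" using c_odd[OF s] by (cases cb) (auto simp: X_def cb_def)
  ultimately have "even ((a - X) - (vL - X))" by (rule dvd_diff[rotated])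
  then have ev: "even (a - vL)" by simp
  obtain L where L: "L \<in> J p q (2*j+2)" "af L = cb" "psi p q (2*j+2) L = a"
      "snd (Delta p q (2*j+2) L) = vL"
    using EP_use[OF E ra(1) ra(2) vr(1) vr(2)[unfolded M_def] ev] by blast
  have even_bb: "even (b - b)" by simp
  obtain R where R: "R \<in> J p q (2*j+2)" "af R = cb" "psi p q (2*j+2) R = b"
      "snd (Delta p q (2*j+2) R) = b"
    using EP_use[OF E rb(1) rb(2) rb(1) rb(2) even_bb, of cb] by blast
  have sub: "J p q (2*j+2) \<subseteq> AutT (Suc (2*j+2))" by (rule J_AutT) simp
  have LA: "L \<in> AutT (Suc (2*j+2))" "R \<in> AutT (Suc (2*j+2))"
    using sub L(1) R(1) by blast+
  have "Node e L R \<in> AutT (Suc (Suc (2*j+2)))" using LA by (rule Node_AutT[THEN iffD2, OF conjI])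
  moreover have "Suc (Suc (2*j+2)) = 2*j+4" by simp
  ultimately have A: "Node e L R \<in> AutT (2*j+4)" by metis
  have "Delta p q (2*j+2) L = (cb, vL)" using Delta_pair[of p q "2*j+2" L] L(2) L(4) by simp
  moreover have "Delta p q (2*j+2) R = (cb, b)" using Delta_pair[of p q "2*j+2" R] R(2) R(4) by simp
  ultimately have "Delta p q (2*j+2) L = Phi p q (2^(j+1)) (Delta p q (2*j+2) R)"
    by (simp add: Phi_def vL_def X_def M_def)
  then have "Node e L R \<in> J p q (2*j+3)" using A L(1) R(1) unfolding J_odd by (simp del: AutT.simps)
  moreover have "Suc (2*j+2) = 2*j+3" by simp
  ultimately have hJ: "Node e L R \<in> J p q (Suc (2*j+2))" by metis
  show "\<exists>h\<in>J p q (Suc (2*j+2)). af h = e \<and> psi p q (2*j+2) (aL h) = a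
      \<and> psi p q (2*j+2) (aR h) = b" using L R by (intro bexI[OF _ hJ]) simp
qed


lemma half_dvd:
  fixes M X W :: int
  assumes "even W" "M dvd (X - W div 2)"
  shows "(2*M) dvd (2*X - W)"
proof -
  have "2 * (W div 2) = W" using assms(1) by simp
  moreover have "(2*M) dvd (2*(X - W div 2))" using mult_dvd_mono[OF dvd_refl[of 2] assms(2)] by simp
  ultimately show ?thesis by (simp add: algebra_simps)
qed

lemma E_step:
  assumes s: "odd (p+q)" and O: "OP p q (2*j+2) (2^(j+1))"
  shows "EP p q (2*j+4) (2^(j+2))"
  unfolding EP_def
proof (intro allI impI)
  fix f and u v :: int
  assume ru: "0 \<le> u" "u < 2^(j+2)" and rv: "0 \<le> v" "v < 2^(j+2)" and uv: "even (u - v)"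
  define M where "M = (2::int)^(j+1)"
  define S where "S = p + q"
  define e where "e = odd u"
  define E where "E = (if e then (p+q)*(p-q) else 0)"
  define W where "W = S^2 * u + E"
  define V where "V = S * v + E"
  define X where "X = (W div 2) mod M"
  define Y where "Y = (V div 2) mod M"
  define b2 where "b2 = (- Y) mod M"
  define b1 where "b1 = (X - b2 - E) mod M"
  have Mpos: "M > 0" by (simp add: M_def)
  have M2: "(2::int)^(j+2) = 2 * M" by (simp add: M_def)
  have So: "odd S" using s by (simp add: S_def)
  have co: "odd ((p+q)*(p-q))" using c_odd[OF s] .
  have eW: "even W" using So co by (cases e) (auto simp: W_def E_def e_def)
  have eV: "even V" using So co uv by (cases e) (auto simp: V_def E_def e_def)
  have rX: "0 \<le> X" "X < M" using Mpos by (simp_all add: X_def)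
  have r2: "0 \<le> b2" "b2 < M" using Mpos by (simp_all add: b2_def)
  have r1: "0 \<le> b1" "b1 < M" using Mpos by (simp_all add: b1_def)
  have z: "(0::int) \<le> 0" "(0::int) < M" using Mpos by simp_all
  obtain L where L: "L \<in> J p q (Suc (2*j+2))" "af L = e" "psi p q (2*j+2) (aL L) = 0"
      "psi p q (2*j+2) (aR L) = b1"
    using OP_use[OF O z(1) z(2)[unfolded M_def] r1(1) r1(2)[unfolded M_def]] by blast
  obtain R where R: "R \<in> J p q (Suc (2*j+2))" "af R = e" "psi p q (2*j+2) (aL R) = X"
      "psi p q (2*j+2) (aR R) = b2"
    using OP_use[OF O rX(1) rX(2)[unfolded M_def] r2(1) r2(2)[unfolded M_def]] by blast
  have s3: "Suc (2*j+2) = 2*j+3" by simp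
  have sub: "J p q (2*j+3) \<subseteq> AutT (Suc (2*j+3))" by (rule J_AutT) simp
  have LA: "L \<in> AutT (Suc (2*j+3))" "R \<in> AutT (Suc (2*j+3))"
    using sub L(1)[unfolded s3] R(1)[unfolded s3] by blast+
  have "Node f L R \<in> AutT (Suc (Suc (2*j+3)))" using LA by (rule Node_AutT[THEN iffD2, OF conjI])
  moreover have "Suc (Suc (2*j+3)) = 2*j+5" by simp
  ultimately have A: "Node f L R \<in> AutT (2*j+5)" by metis
  have d1: "M dvd b1 - (X - b2 - E)" unfolding b1_def by (rule dvd_mod_sub)
  have d2: "M dvd (X - b2) mod M - (X - b2)" by (rule dvd_mod_sub)
  have "M dvd ((X - b2) mod M - (X - b2)) - (b1 - (X - b2 - E))" using d1 d2 by (rule dvd_diff[rotated])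
  then have "M dvd (0 - b1) - (E - (X - b2) mod M)" by (simp add: algebra_simps)
  then have eq1: "(0 - b1) mod M = (E - (X - b2) mod M) mod M" by (simp add: mod_eq_dvd_iff)
  have "Delta p q (2*j+3) L = Phi p q (2^(j+1)) (Delta p q (2*j+3) R)"
    using L R eq1 by (simp add: Delta_odd Phi_def M_def E_def)
  then have hJ: "Node f L R \<in> J p q (2*j+4)" using A L(1) R(1) unfolding J_even s3 by (simp del: AutT.simps)
  have "psi p q (2*j+4) (Node f L R) = divm (2^(j+2)) (S^2) (2*(0 + X) - E)"
    using L R by (simp add: psi_even S_def E_def)
  also have "\<dots> = u"
  proof (rule divm_unique)
    show "odd (S^2)" using So by simp
    show "0 \<le> u" "u < 2^(j+2)" using ru by simp_all
    have "M dvd (X - W div 2)" unfolding X_def by (rule dvd_mod_sub)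
    then have "(2*M) dvd (2*X - W)" using eW half_dvd by blast
    then have "(2*M) dvd - (2*X - W)" by (rule dvd_minus_iff[THEN iffD2])
    moreover have "- (2*X - W) = W - 2*X" by simp
    ultimately have "(2*M) dvd W - 2*X" by metis
    moreover have "W - 2*X = S^2 * u - (2*(0 + X) - E)" by (simp add: W_def)
    ultimately show "2^(j+2) dvd S^2 * u - (2*(0 + X) - E)" unfolding M2 by metis
  qed
  finally have pu: "psi p q (2*j+4) (Node f L R) = u" .
  define w where "w = psi p q (2*j+3) R"
  have w: "w = divm (2^(j+1)) S (X + b2)" using R by (simp add: w_def psi_odd S_def)
  have dB0: "M dvd S * w - (X + b2)" using divm_prop[OF So, of "j+1" "X+b2"] w by (simp add: M_def)
  have dA: "(2*M) dvd (2*X - W)"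
    using eW half_dvd[of W M X] dvd_mod_sub[of M "W div 2"] by (simp add: X_def)
  have dB: "(2*M) dvd 2 * (S * w - (X + b2))" using mult_dvd_mono[OF dvd_refl[of 2] dB0] by simp
  have dC0: "M dvd b2 + Y" using dvd_mod_sub[of M "-Y"] by (simp add: b2_def)
  have dC: "(2*M) dvd 2 * (b2 + Y)" using mult_dvd_mono[OF dvd_refl[of 2] dC0] by simp
  have dD: "(2*M) dvd (2*Y - V)"
    using eV half_dvd[of V M Y] dvd_mod_sub[of M "V div 2"] by (simp add: Y_def)
  have "(2*M) dvd (- (2*X - W)) - 2 * (S * w - (X + b2)) - 2 * (b2 + Y) + (2*Y - V)"
    by (rule dvd_add[OF dvd_diff[OF dvd_diff[OF dvd_minus_iff[THEN iffD2, OF dA] dB] dC] dD])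
  moreover have "(- (2*X - W)) - 2 * (S * w - (X + b2)) - 2 * (b2 + Y) + (2*Y - V)
      = S * (S * u - 2 * w - v)"
    by (simp add: W_def V_def algebra_simps power2_eq_square)
  ultimately have "(2::int)^(j+2) dvd S * (S * u - 2 * w - v)" using M2 by simp
  then have "(2::int)^(j+2) dvd (S * u - 2 * w - v)" using So pow2_dvd_cancel_odd by blast
  then have "(S * u - 2 * w) mod 2^(j+2) = v mod 2^(j+2)" by (simp add: mod_eq_dvd_iff)
  also have "\<dots> = v" using rv by simp
  finally have pv: "snd (Delta p q (2*j+4) (Node f L R)) = v"
    using pu by (simp add: Delta_even S_def w_def)
  show "\<exists>h\<in>J p q (2*j+4). af h = f \<and> psi p q (2*j+4) h = u \<and> snd (Delta p q (2*j+4) h) = v"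
    using pu pv by (intro bexI[OF _ hJ]) simp
qed

lemma EP_all: "odd (p+q) \<Longrightarrow> EP p q (2*j+2) (2^(j+1))"
proof (induction j)
  case 0
  have "2*0+2 = (2::nat)" "(2::int)^(0+1) = 2" by simp_all
  then show ?case using E_base by metis
next
  case (Suc j)
  then have "EP p q (2*j+4) (2^(j+2))" using O_step E_step by blast
  moreover have "2*Suc j+2 = 2*j+4" "Suc j + 1 = j+2" by simp_all
  ultimately show ?case by metis
qed

lemma Delta_range: "n \<ge> 1 \<Longrightarrow> 0 \<le> snd (Delta p q n g) \<and> snd (Delta p q n g) < 2^(n div 2)"
proof -
  assume "n \<ge> 1"
  then have "n = 1 \<or> n = 2 \<or> (\<exists>k. n = 2*k+3) \<or> (\<exists>k. n = 2*k+4)" by presburger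
  then consider "n = 1" | "n = 2" | k where "n = 2*k+3" | k where "n = 2*k+4" by blast
  then show ?thesis
  proof cases
    case 1 then show ?thesis by simp
  next
    case 2 then show ?thesis by (simp add: numeral_2_eq_2)
  next
    case 3
    then have "n div 2 = k+1" by simp
    then show ?thesis using 3 by (simp add: Delta_odd)
  next
    case 4
    then have "n div 2 = k+2" by simp
    then show ?thesis using 4 by (simp add: Delta_even)
  qed
qed

theorem lemma3:
  fixes p q :: int and n :: nat
  assumes "p > 0" and "q > 0" and "odd (p + q)" and "n \<ge> 1"
  shows "Delta p q n ` J p q n = Dih (2 ^ (n div 2))"
proof
  show "Delta p q n ` J p q n \<subseteq> Dih (2 ^ (n div 2))"
  proof
    fix d assume "d \<in> Delta p q n ` J p q n"
    then obtain g where "d = Delta p q n g" by blast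
    then show "d \<in> Dih (2 ^ (n div 2))"
      using Delta_range[OF assms(4), of p q g] Delta_pair[of p q n g] by (auto simp: Dih_def split: prod.splits)
  qed
next
  show "Dih (2 ^ (n div 2)) \<subseteq> Delta p q n ` J p q n"
  proof
    fix d assume "d \<in> Dih (2 ^ (n div 2))"
    then obtain f x where d: "d = (f, x)" "0 \<le> x" "x < 2 ^ (n div 2)" by (auto simp: Dih_def)
    have "n = 1 \<or> (\<exists>j. n = 2*j+2) \<or> (\<exists>j. n = 2*j+3)" using assms(4) by presburger
    then consider "n = 1" | j where "n = 2*j+2" | j where "n = 2*j+3" by blast
    then show "d \<in> Delta p q n ` J p q n"
    proof cases
      case 1
      then have "x = 0" using d by simp
      moreover have "Node f Leaf Leaf \<in> J p q n" using 1 by (simp add: numeral_2_eq_2 AutT.simps)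
      moreover have "Delta p q n (Node f Leaf Leaf) = (f, 0)" using 1 by simp
      ultimately show ?thesis using d by (metis image_eqI)
    next
      case 2
      then have nd: "n div 2 = j+1" by simp
      have E: "EP p q (2*j+2) (2^(j+1))" using EP_all assms(3) by blast
      define u where "u = x mod 2"
      have u: "0 \<le> u" "u < 2^(j+1)" "even (u - x)"
      proof -
        have a: "u < 2" unfolding u_def by simp
        have "(1::int) \<le> 2^j" by simp
        then have "(2::int) \<le> 2^(j+1)" by simp
        with a show "u < 2^(j+1)" by linarith
        show "0 \<le> u" unfolding u_def by simp
        show "even (u - x)" unfolding u_def by (simp add: mod_eq_dvd_iff[symmetric])
      qed
      have x2: "x < 2^(j+1)" using d(3) nd by simp
      obtain h where h: "h \<in> J p q (2*j+2)" "af h = f" "snd (Delta p q (2*j+2) h) = x"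
        using EP_use[OF E u(1) u(2) d(2) x2 u(3)] by blast
      then have "Delta p q (2*j+2) h = (f, x)" using Delta_pair[of p q "2*j+2" h] by simp
      then have "Delta p q n h = d" using 2 d by simp
      then show ?thesis using h 2 by blast
    next
      case 3
      then have nd: "n div 2 = j+1" by simp
      have z0: "(0::int) \<le> 0" by simp
      have zp: "(0::int) < 2^(j+1)" by simp
      have OPj: "OP p q (2*j+2) (2^(j+1))" using EP_all O_step assms(3) by blast
      have x2: "x < 2^(j+1)" using d(3) nd by simp
      obtain h where h: "h \<in> J p q (Suc (2*j+2))" "af h = f" "psi p q (2*j+2) (aL h) = x"
        "psi p q (2*j+2) (aR h) = 0"
        using OP_use[OF OPj d(2) x2 z0 zp, of f] by blast
      have "Delta p q (2*j+3) h = (f, x)" using h d nd by (simp add: Delta_odd)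
      moreover have "Suc (2*j+2) = 2*j+3" by simp
      ultimately show ?thesis using h 3 d by (metis image_eqI)
    qed
  qed
qed

end
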